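(* Let $l\ge 1$, let $a_j,b_j,k_j$ $(1\le j\le l)$ be integers with $k_j\ge 1$ and $a_1\cdots a_l\ne 0$, and let $f(t)=\prod_{j=1}^{l}(a_jt^{k_j}-b_j)\in\mathbb{Z}[t]$. Then there is a constant $c=c(k_1,\ldots,k_l)>0$ such that there are polynomials $g\in\mathbb{Z}[t]$ of arbitrarily large degree $d$ for which $f(g(t))$ factors as a product of polynomials of degree at most $cd/(\log\log d)^{1/l}$. Consequently $f$ admits polysmoothness $\varepsilon$ for every $\varepsilon>0$.
   Context: A polynomial $f\in\mathbb{Z}[t]$ of positive degree admits polysmoothness $\theta$ (for a real $\theta\ge 0$) if there exists a non-constant polynomial $g\in\mathbb{Z}[t]$ such that every irreducible factor of $f(g(t))$ has degree at most $\theta\,(\deg f)(\deg g)$. *)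

theory Defs
  imports Complex_Main "HOL-Computational_Algebra.Polynomial"
begin

definition admits_polysmoothness :: "int poly \<Rightarrow> real \<Rightarrow> bool" where
  "admits_polysmoothness f \<theta> \<longleftrightarrow>
     (\<exists>g :: int poly. degree g > 0 \<and>
        (\<forall>q :: int poly. irreducible q \<and> q dvd pcompose f g \<longrightarrow>
            real (degree q) \<le> \<theta> * real (degree f) * real (degree g)))"

end

theory Submission
  imports Defs "HOL-Computational_Algebra.Polynomial_Factorial" "HOL-Number_Theory.Totient" "HOL-Number_Theory.Cong" "HOL-Analysis.Harmonic_Numbers" "HOL-Library.FuncSet"
begin
definition prim :: "nat \<Rightarrow> complex set" where
  "prim d = {z. z^d = 1 \<and> (\<forall>j. 0<j \<and> j<d \<longrightarrow> z^j \<noteq> 1)}"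

definition cyc :: "nat \<Rightarrow> complex poly" where
  "cyc d = (\<Prod>z\<in>prim d. [:-z,1:])"

lemma finite_prim: "d > 0 \<Longrightarrow> finite (prim d)"
  by (rule finite_subset[of _ "{z. z^d = 1}"]) (auto simp: prim_def intro: finite_nth_roots)

lemma roots_decomp:
  assumes n: "n > 0"
  shows "{z::complex. z^n = 1} = (\<Union>d\<in>{d. d dvd n}. prim d)"
proof
  show "(\<Union>d\<in>{d. d dvd n}. prim d) \<subseteq> {z. z^n = 1}"
  proof clarify
    fix d z assume "d dvd n" "z \<in> prim d"
    then obtain m where "n = d * m" by blast
    with \<open>z \<in> prim d\<close> show "z^n = 1" by (simp add: prim_def power_mult)
  qed
next
  show "{z. z^n = 1} \<subseteq> (\<Union>d\<in>{d. d dvd n}. prim d)"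
  proof clarify
    fix z :: complex assume z: "z^n = 1"
    define d where "d = (LEAST j. 0 < j \<and> z^j = 1)"
    have ex: "0 < n \<and> z^n = 1" using n z by simp
    have d1: "0 < d \<and> z^d = 1" unfolding d_def by (rule LeastI[of _ n]) (rule ex)
    have d2: "\<And>j. 0 < j \<Longrightarrow> j < d \<Longrightarrow> z^j \<noteq> 1"
      unfolding d_def using not_less_Least by blast
    have "z ^ (n mod d) = 1"
    proof -
      have "z^n = z^(d*(n div d) + n mod d)" by (simp only: mult_div_mod_eq)
      also have "\<dots> = (z^d)^(n div d) * z^(n mod d)" by (simp only: power_add power_mult)
      finally have "z^n = (z^d)^(n div d) * z^(n mod d)" .
      thus ?thesis using z d1 by simp
    qed
    hence "n mod d = 0" using d2[of "n mod d"] d1 by (metis mod_less_divisor neq0_conv)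
    hence "d dvd n" by auto
    moreover have "z \<in> prim d" using d1 d2 by (auto simp: prim_def)
    ultimately show "z \<in> (\<Union>d\<in>{d. d dvd n}. prim d)" by blast
  qed
qed

lemma prim_disjoint:
  assumes "d \<noteq> d'" "0 < d" "0 < d'"
  shows "prim d \<inter> prim d' = {}"
proof (rule ccontr)
  assume "prim d \<inter> prim d' \<noteq> {}"
  then obtain z where z: "z \<in> prim d" "z \<in> prim d'" by blast
  show False
  proof (cases "d < d'")
    case True thus False using z assms by (auto simp: prim_def)
  next
    case False hence "d' < d" using assms by simp
    thus False using z assms by (auto simp: prim_def)
  qed
qed

lemma prod_roots_dvd:
  fixes p :: "complex poly"
  assumes "finite A" "\<forall>a\<in>A. poly p a = 0" "p \<noteq> 0"
  shows "(\<Prod>a\<in>A. [:-a,1:]) dvd p"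
  using assms
proof (induction A arbitrary: p rule: finite_induct)
  case empty thus ?case by simp
next
  case (insert a A)
  from insert.prems have "[:-a,1:] dvd p" by (simp add: poly_eq_0_iff_dvd)
  then obtain q where q: "p = [:-a,1:] * q" by blast
  have "q \<noteq> 0" using insert.prems q by auto
  have "\<forall>b\<in>A. poly q b = 0"
  proof
    fix b assume "b \<in> A"
    hence "b \<noteq> a" using insert by auto
    moreover have "poly p b = 0" using insert.prems \<open>b\<in>A\<close> by auto
    ultimately show "poly q b = 0" using q by simp
  qed
  hence "(\<Prod>a\<in>A. [:-a,1:]) dvd q" using insert.IH \<open>q \<noteq> 0\<close> by blast
  thus ?case unfolding q prod.insert[OF insert(1,2)] by (rule mult_dvd_mono[OF dvd_refl])
qed

lemma prod_roots_unity:
  assumes n: "n > 0"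
  shows "(\<Prod>z\<in>{z::complex. z^n = 1}. [:-z,1:]) = monom 1 n - 1"
proof -
  define A where "A = {z::complex. z^n = 1}"
  define P where "P = (monom 1 n - 1 :: complex poly)"
  have fin: "finite A" unfolding A_def using n by (rule finite_nth_roots)
  have cardA: "card A = n" unfolding A_def using n by (simp add: card_nth_roots)
  have "degree (monom 1 n + (-1) :: complex poly) = n"
    by (subst degree_add_eq_left) (use n in \<open>simp_all add: degree_monom_eq\<close>)
  hence degP: "degree P = n" unfolding P_def by simp
  have lcP: "lead_coeff P = 1" using degP n unfolding P_def by (simp add: coeff_monom)
  have "P \<noteq> 0" using lcP by auto
  have "\<forall>a\<in>A. poly P a = 0" unfolding A_def P_def by (simp add: poly_monom)
  hence "(\<Prod>a\<in>A. [:-a,1:]) dvd P" using prod_roots_dvd fin \<open>P \<noteq> 0\<close> by blast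
  then obtain q where q: "P = (\<Prod>a\<in>A. [:-a,1:]) * q" by blast
  have degprod: "degree (\<Prod>a\<in>A. [:-a,1::complex:]) = n"
    using cardA by (subst degree_prod_eq_sum_degree) auto
  have lcprod: "lead_coeff (\<Prod>a\<in>A. [:-a,1::complex:]) = 1"
    by (simp add: lead_coeff_prod)
  have "q \<noteq> 0" using q \<open>P \<noteq> 0\<close> by auto
  have "(\<Prod>a\<in>A. [:-a,1::complex:]) \<noteq> 0" using lcprod by auto
  hence "degree P = n + degree q" using q degprod \<open>q \<noteq> 0\<close> by (simp add: degree_mult_eq)
  hence "degree q = 0" using degP by simp
  then obtain c where c: "q = [:c:]" by (meson degree_eq_zeroE)
  have "lead_coeff P = c" using q c lcprod by (simp add: lead_coeff_mult)
  hence "c = 1" using lcP by simp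
  thus ?thesis using q c unfolding A_def P_def by simp
qed

lemma cyc_prod:
  assumes n: "n > 0"
  shows "(\<Prod>d\<in>{d. d dvd n}. cyc d) = monom 1 n - 1"
proof -
  have fin: "finite {d. d dvd n}" using n by simp
  have pos: "\<And>d. d \<in> {d. d dvd n} \<Longrightarrow> 0 < d" using n by (auto intro: Nat.gr0I)
  have "monom 1 n - 1 = (\<Prod>z\<in>(\<Union>d\<in>{d. d dvd n}. prim d). [:-z,1:])"
    using prod_roots_unity[OF n] roots_decomp[OF n] by simp
  also have "\<dots> = (\<Prod>d\<in>{d. d dvd n}. \<Prod>z\<in>prim d. [:-z,1:])"
  proof (rule prod.UNION_disjoint)
    show "\<forall>i\<in>{d. d dvd n}. finite (prim i)" using pos finite_prim by blast
    show "\<forall>i\<in>{d. d dvd n}. \<forall>j\<in>{d. d dvd n}. i \<noteq> j \<longrightarrow> prim i \<inter> prim j = {}"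
      using pos prim_disjoint by blast
  qed (rule fin)
  finally show ?thesis unfolding cyc_def by simp
qed

definition intp :: "complex poly \<Rightarrow> bool" where "intp p \<longleftrightarrow> (\<forall>i. coeff p i \<in> \<int>)"

lemma intp_mult: "intp p \<Longrightarrow> intp q \<Longrightarrow> intp (p*q)"
  by (auto simp: intp_def coeff_mult intro!: Ints_sum Ints_mult)
lemma intp_diff: "intp p \<Longrightarrow> intp q \<Longrightarrow> intp (p-q)"
  by (auto simp: intp_def intro!: Ints_diff)
lemma intp_add: "intp p \<Longrightarrow> intp q \<Longrightarrow> intp (p+q)"
  by (auto simp: intp_def intro!: Ints_add)
lemma intp_monom: "c \<in> \<int> \<Longrightarrow> intp (monom c n)"
  by (auto simp: intp_def coeff_monom)
lemma intp_1: "intp 1"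
  by (auto simp: intp_def)
lemma intp_prod: "(\<forall>x\<in>A. intp (f x)) \<Longrightarrow> intp (prod f A)"
  by (induction A rule: infinite_finite_induct) (auto simp: intp_1 intp_mult)

lemma intp_div:
  assumes "intp P" "intp R" "lead_coeff R = 1" "P = Q * R"
  shows "intp Q"
  using assms
proof (induction "degree Q" arbitrary: Q P rule: less_induct)
  case less
  show ?case
  proof (cases "Q = 0")
    case True thus ?thesis by (simp add: intp_def)
  next
    case False
    define m where "m = degree Q"
    define c where "c = lead_coeff Q"
    have "coeff P (m + degree R) = c * lead_coeff R"
      unfolding less.prems(4) m_def c_def by (rule coeff_mult_degree_sum)
    hence cZ: "c \<in> \<int>" using less.prems(1,3) by (auto simp: intp_def)
    define Q' where "Q' = Q - monom c m"
    have iP': "intp (P - monom c m * R)"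
      using less.prems(1,2) cZ by (intro intp_diff intp_mult intp_monom)
    have eq: "P - monom c m * R = Q' * R" by (simp add: Q'_def less.prems(4) algebra_simps)
    show ?thesis
    proof (cases "Q' = 0")
      case True
      hence "Q = monom c m" by (simp add: Q'_def)
      thus ?thesis using cZ by (simp add: intp_monom)
    next
      case False
      have "\<forall>i>m. coeff Q' i = 0" unfolding Q'_def m_def by (auto simp: coeff_monom coeff_eq_0)
      hence "degree Q' \<le> m" by (rule degree_le)
      moreover have "coeff Q' m = 0" unfolding Q'_def c_def m_def by simp
      ultimately have "degree Q' < degree Q" using False unfolding m_def
        by (metis le_neq_implies_less leading_coeff_0_iff)
      hence "intp Q'" using less.hyps[OF _ iP' less.prems(2,3) eq] by blast
      moreover have "Q = Q' + monom c m" by (simp add: Q'_def)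
      ultimately show ?thesis using cZ by (simp add: intp_add intp_monom)
    qed
  qed
qed

lemma cyc_monic: "lead_coeff (cyc d) = 1" by (simp add: cyc_def lead_coeff_prod)

lemma cyc_int: "n > 0 \<Longrightarrow> intp (cyc n)"
proof (induction n rule: less_induct)
  case (less n)
  define R where "R = (\<Prod>d\<in>{d. d dvd n} - {n}. cyc d)"
  have fin: "finite {d. d dvd n}" using less.prems by simp
  have "monom 1 n - 1 = cyc n * R"
    unfolding R_def using cyc_prod[OF less.prems] prod.remove[OF fin, of n cyc] by simp
  moreover have "intp R" unfolding R_def
  proof (rule intp_prod, rule ballI)
    fix d assume d: "d \<in> {d. d dvd n} - {n}"
    hence "d \<le> n" "d \<noteq> n" "0 < d" using less.prems by (auto intro: dvd_imp_le Nat.gr0I)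
    thus "intp (cyc d)" using less.IH by simp
  qed
  moreover have "lead_coeff R = 1" unfolding R_def by (simp add: lead_coeff_prod cyc_monic)
  moreover have "intp (monom 1 n - 1)" by (intro intp_diff intp_monom intp_1) simp
  ultimately show ?case using intp_div by metis
qed

lemma prim_sub_totatives:
  assumes d: "d > 0"
  shows "prim d \<subseteq> (\<lambda>k. cis (2*pi*real k / real d)) ` totatives d"
proof
  fix z assume z: "z \<in> prim d"
  hence "z \<in> {z. z^d = 1}" by (simp add: prim_def)
  then obtain k where k: "k < d" "z = cis (2*pi*real k/real d)"
    using Complex.bij_betw_roots_unity[OF d] by (auto simp: bij_betw_def)
  show "z \<in> (\<lambda>k. cis (2*pi*real k / real d)) ` totatives d"
  proof (cases "k = 0")
    case True
    hence z1: "z = 1" using k by simp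
    have "d = 1"
    proof (rule ccontr)
      assume "d \<noteq> 1" hence "1 < d" using d by simp
      thus False using z z1 by (auto simp: prim_def)
    qed
    moreover have "cis (2*pi*real 1 / real 1) = z" using z1 by simp
    ultimately show ?thesis by (intro image_eqI[of _ _ 1]) (auto simp: in_totatives_iff)
  next
    case False
    have "coprime k d"
    proof (rule ccontr)
      assume nc: "\<not> coprime k d"
      define g where "g = gcd k d"
      have "g \<noteq> 1" using nc by (simp add: g_def coprime_iff_gcd_eq_1)
      moreover have "g > 0" using False by (simp add: g_def)
      ultimately have g1: "g > 1" by simp
      obtain j where dj: "d = g * j" unfolding g_def by (meson gcd_dvd2 dvdE)
      obtain i where ki: "k = g * i" unfolding g_def by (meson gcd_dvd1 dvdE)
      have j0: "0 < j" using dj d by simp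
      have jd: "j < d" using dj g1 j0 by simp
      have "z^j = cis (real j * (2*pi*real k/real d))" using k by (simp add: Complex.DeMoivre)
      also have "real j * (2*pi*real k/real d) = 2*pi*real i"
        using dj ki g1 j0 by (simp add: field_simps)
      also have "cis (2*pi*real i) = 1" by (rule cis_multiple_2pi) simp
      finally have "z^j = 1" .
      thus False using z j0 jd by (auto simp: prim_def)
    qed
    thus ?thesis using k False by (intro image_eqI[of _ _ k]) (auto simp: in_totatives_iff)
  qed
qed

lemma card_prim_le: "d > 0 \<Longrightarrow> card (prim d) \<le> totient d"
proof -
  assume d: "d > 0"
  have "card (prim d) \<le> card ((\<lambda>k. cis (2*pi*real k / real d)) ` totatives d)"
    by (rule card_mono[OF _ prim_sub_totatives[OF d]]) (simp add: totatives_def)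
  also have "\<dots> \<le> card (totatives d)" by (rule card_image_le) (simp add: totatives_def)
  finally show ?thesis by (simp add: totient_def)
qed

lemma degree_cyc: "d > 0 \<Longrightarrow> degree (cyc d) = card (prim d)"
  unfolding cyc_def using finite_prim by (subst degree_prod_eq_sum_degree) auto

lemma map_poly_of_int_mult:
  "map_poly (of_int :: int \<Rightarrow> 'a::comm_ring_1) (p*q) = map_poly of_int p * map_poly of_int q"
  by (rule poly_eqI) (simp add: coeff_map_poly coeff_mult of_int_sum)

lemma map_poly_of_int_prod:
  "map_poly (of_int :: int \<Rightarrow> 'a::comm_ring_1) (prod f A) = (\<Prod>x\<in>A. map_poly of_int (f x))"
  by (induction A rule: infinite_finite_induct) (auto simp: map_poly_of_int_mult)

lemma map_poly_of_int_inj: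
  assumes "map_poly (of_int :: int \<Rightarrow> complex) p = map_poly of_int q"
  shows "p = q"
proof (rule poly_eqI)
  fix i
  have "coeff (map_poly (of_int :: int \<Rightarrow> complex) p) i = coeff (map_poly of_int q) i"
    using assms by simp
  thus "coeff p i = coeff q i" by (simp add: coeff_map_poly)
qed

definition cycZ :: "nat \<Rightarrow> int poly" where
  "cycZ d = (SOME q. cyc d = map_poly of_int q)"

lemma cycZ: "d > 0 \<Longrightarrow> map_poly of_int (cycZ d) = cyc d"
proof -
  assume d: "d > 0"
  have "\<And>i. coeff (cyc d) i \<in> \<int>" using cyc_int[OF d] unfolding intp_def by blast
  then obtain q where "cyc d = map_poly of_int q" by (rule intpolyE)
  hence "cyc d = map_poly of_int (cycZ d)" unfolding cycZ_def by (rule someI)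
  thus ?thesis by simp
qed

lemma degree_cycZ: "d > 0 \<Longrightarrow> degree (cycZ d) \<le> totient d"
proof -
  assume d: "d > 0"
  have "degree (cycZ d) = degree (map_poly (of_int :: int \<Rightarrow> complex) (cycZ d))"
    by (rule sym, rule degree_map_poly) simp
  also have "\<dots> = card (prim d)" using d by (simp add: cycZ degree_cyc)
  also have "\<dots> \<le> totient d" using d by (rule card_prim_le)
  finally show ?thesis .
qed

lemma cycZ_prod:
  assumes n: "n > 0"
  shows "(\<Prod>d\<in>{d. d dvd n}. cycZ d) = monom 1 n - 1"
proof (rule map_poly_of_int_inj)
  have "map_poly (of_int :: int \<Rightarrow> complex) (\<Prod>d\<in>{d. d dvd n}. cycZ d) = (\<Prod>d\<in>{d. d dvd n}. cyc d)"
    unfolding map_poly_of_int_prod using n by (intro prod.cong refl) (auto simp: cycZ intro: Nat.gr0I)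
  also have "\<dots> = monom 1 n - 1" using n by (rule cyc_prod)
  also have "\<dots> = map_poly (of_int :: int \<Rightarrow> complex) (monom 1 n - 1)"
    by (rule poly_eqI) (simp add: coeff_map_poly coeff_monom)
  finally show "map_poly (of_int :: int \<Rightarrow> complex) (\<Prod>d\<in>{d. d dvd n}. cycZ d) =
     map_poly of_int (monom 1 n - 1)" .
qed

lemma cyc_factor_list:
  assumes e: "e > 0"
  shows "\<exists>qs::int poly list. prod_list qs = monom 1 e - 1 \<and> (\<forall>q\<in>set qs. degree q \<le> totient e)"
proof -
  define xs where "xs = sorted_list_of_set {d. d dvd e}"
  have fin: "finite {d. d dvd e}" using e by simp
  have "prod_list (map cycZ xs) = (\<Prod>d\<in>{d. d dvd e}. cycZ d)"
    unfolding xs_def using fin by (simp add: prod.distinct_set_conv_list[symmetric])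
  also have "\<dots> = monom 1 e - 1" using e by (rule cycZ_prod)
  finally have 1: "prod_list (map cycZ xs) = monom 1 e - 1" .
  have "\<forall>q\<in>set (map cycZ xs). degree q \<le> totient e"
  proof
    fix q assume "q \<in> set (map cycZ xs)"
    then obtain d where d: "d dvd e" "q = cycZ d" unfolding xs_def using fin by auto
    have "0 < d" using d e by (auto intro: Nat.gr0I)
    hence "degree q \<le> totient d" using d degree_cycZ by simp
    also have "\<dots> \<le> totient e" using d e by (intro totient_dvd_mono)
    finally show "degree q \<le> totient e" .
  qed
  with 1 show ?thesis by blast
qed

lemma pcompose_prod_list: "pcompose (prod_list ps) q = prod_list (map (\<lambda>p. pcompose p q) ps)"
  by (induction ps) (auto simp: pcompose_mult pcompose_1)

lemma pcompose_monom1: "pcompose (monom 1 n) q = q ^ n"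
  by (induction n) (auto simp: monom_Suc pcompose_pCons monom_0 pcompose_1)

lemma power_factor_list:
  fixes \<gamma> :: int
  assumes e: "e > 0" and g: "\<gamma> \<noteq> 0"
  shows "\<exists>qs::int poly list. prod_list qs = monom (\<gamma>^e) (s*e) - 1 \<and>
            (\<forall>q\<in>set qs. degree q \<le> totient e * s)"
proof -
  obtain qs :: "int poly list" where qs: "prod_list qs = monom 1 e - 1" "\<forall>q\<in>set qs. degree q \<le> totient e"
    using cyc_factor_list[OF e] by blast
  define rs where "rs = map (\<lambda>p. pcompose p (monom \<gamma> s)) qs"
  have "prod_list rs = pcompose (monom 1 e - 1) (monom \<gamma> s)"
    unfolding rs_def qs(1)[symmetric] by (rule pcompose_prod_list[symmetric])
  also have "\<dots> = monom (\<gamma>^e) (s*e) - 1"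
    by (simp add: pcompose_diff pcompose_monom1 pcompose_1 monom_power)
  finally have 1: "prod_list rs = monom (\<gamma>^e) (s*e) - 1" .
  have "\<forall>r\<in>set rs. degree r \<le> totient e * s"
  proof
    fix r assume "r \<in> set rs"
    then obtain q where q: "q \<in> set qs" "r = pcompose q (monom \<gamma> s)" unfolding rs_def by auto
    have "degree r = degree q * s" using q g by (simp add: degree_pcompose degree_monom_eq)
    thus "degree r \<le> totient e * s" using qs(2) q by simp
  qed
  with 1 show ?thesis by blast
qed

lemma multiplicity_le_self:
  fixes p n :: nat
  assumes "prime p" "n > 0"
  shows "multiplicity p n \<le> n"
proof -
  define m where "m = multiplicity p n"
  have "p^m dvd n" unfolding m_def by (rule multiplicity_dvd)
  hence "p^m \<le> n" using assms by (intro dvd_imp_le) auto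
  moreover have "m < 2^m" by (rule less_exp)
  moreover have "2^m \<le> p^m" using prime_ge_2_nat[OF assms(1)] by (intro power_mono) auto
  ultimately show ?thesis unfolding m_def by linarith
qed

lemma prod_mult_primes:
  fixes n Y :: nat
  assumes n: "n \<in> {1..Y}"
  shows "real n = (\<Prod>p\<in>{p. prime p \<and> p \<le> Y}. real p ^ multiplicity p n)"
proof -
  have n0: "n > 0" using n by simp
  have "real n = real (\<Prod>p\<in>prime_factors n. p ^ multiplicity p n)"
    using prime_factorization_nat[OF n0] by simp
  also have "\<dots> = (\<Prod>p\<in>prime_factors n. real p ^ multiplicity p n)" by simp
  also have "\<dots> = (\<Prod>p\<in>{p. prime p \<and> p \<le> Y}. real p ^ multiplicity p n)"
  proof (rule prod.mono_neutral_left)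
    show "finite {p. prime p \<and> p \<le> Y}" by simp
    show "prime_factors n \<subseteq> {p. prime p \<and> p \<le> Y}"
    proof
      fix p assume p: "p \<in> prime_factors n"
      hence "p dvd n" "prime p" by (auto simp: in_prime_factors_iff)
      hence "p \<le> n" using n0 by (intro dvd_imp_le) auto
      thus "p \<in> {p. prime p \<and> p \<le> Y}" using n \<open>prime p\<close> by auto
    qed
    show "\<forall>p\<in>{p. prime p \<and> p \<le> Y} - prime_factors n. real p ^ multiplicity p n = 1"
    proof
      fix p assume p: "p \<in> {p. prime p \<and> p \<le> Y} - prime_factors n"
      hence "multiplicity p n = 0" using n0 by (auto simp: prime_factors_multiplicity)
      thus "real p ^ multiplicity p n = 1" by simp
    qed
  qed
  finally show ?thesis .
qed

lemma harm_le_euler_prod: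
  fixes Y :: nat
  shows "harm Y \<le> (\<Prod>p\<in>{p. prime p \<and> p \<le> Y}. \<Sum>i\<in>{..Y}. inverse (real p) ^ i)"
proof -
  define A where "A = {p. prime p \<and> p \<le> Y}"
  define h where "h = (\<lambda>n. restrict (\<lambda>p. multiplicity p n) A)"
  define F where "F = (\<lambda>g. \<Prod>p\<in>A. inverse (real p) ^ g p)"
  have finA: "finite A" unfolding A_def by simp
  have key: "F (h n) = inverse (real n)" if "n \<in> {1..Y}" for n
  proof -
    have "F (h n) = (\<Prod>p\<in>A. inverse (real p ^ multiplicity p n))"
      unfolding F_def h_def by (intro prod.cong refl) (simp add: power_inverse)
    also have "\<dots> = inverse (\<Prod>p\<in>A. real p ^ multiplicity p n)"
      using prod_inversef[of "\<lambda>p. real p ^ multiplicity p n" A] by (simp add: o_def)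
    also have "(\<Prod>p\<in>A. real p ^ multiplicity p n) = real n"
      unfolding A_def using prod_mult_primes[OF that] by simp
    finally show ?thesis .
  qed
  have inj: "inj_on h {1..Y}"
  proof
    fix m n assume mn: "m \<in> {1..Y}" "n \<in> {1..Y}" "h m = h n"
    have "real m = (\<Prod>p\<in>A. real p ^ h m p)" unfolding A_def h_def
      using prod_mult_primes[OF mn(1)] by (simp add: A_def)
    also have "\<dots> = (\<Prod>p\<in>A. real p ^ h n p)" using mn(3) by simp
    also have "\<dots> = real n" unfolding A_def h_def
      using prod_mult_primes[OF mn(2)] by (simp add: A_def)
    finally show "m = n" by simp
  qed
  have sub: "h ` {1..Y} \<subseteq> PiE A (\<lambda>_. {..Y})"
  proof
    fix g assume "g \<in> h ` {1..Y}"
    then obtain n where n: "n \<in> {1..Y}" "g = h n" by blast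
    have "multiplicity p n \<le> Y" if "p \<in> A" for p
      using multiplicity_le_self[of p n] that n unfolding A_def by fastforce
    thus "g \<in> PiE A (\<lambda>_. {..Y})" using n unfolding h_def by auto
  qed
  have "harm Y = (\<Sum>n\<in>{1..Y}. F (h n))"
    unfolding harm_def by (intro sum.cong refl) (simp add: key)
  also have "\<dots> = (\<Sum>g\<in>h ` {1..Y}. F g)" using inj by (simp add: sum.reindex)
  also have "\<dots> \<le> (\<Sum>g\<in>PiE A (\<lambda>_. {..Y}). F g)"
    by (rule sum_mono2) (use finA sub in \<open>auto simp: F_def intro!: finite_PiE prod_nonneg\<close>)
  also have "\<dots> = (\<Prod>p\<in>A. \<Sum>i\<in>{..Y}. inverse (real p) ^ i)"
    unfolding F_def by (rule prod_sum_PiE[symmetric]) (use finA in auto)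
  finally show ?thesis unfolding A_def .
qed

lemma geom_le:
  fixes p :: nat and Y :: nat
  assumes "prime p"
  shows "(\<Sum>i\<in>{..Y}. inverse (real p) ^ i) \<le> real p / (real p - 1)"
proof -
  have p2: "real p \<ge> 2" using prime_ge_2_nat[OF assms] by simp
  define x where "x = inverse (real p)"
  have xe: "x = 1 / real p" by (simp add: x_def divide_inverse)
  have x: "0 \<le> x" "x < 1" "x \<noteq> 1" using p2 unfolding xe by auto
  have "(\<Sum>i\<in>{..Y}. x ^ i) = (\<Sum>i<Suc Y. x ^ i)" by (simp add: lessThan_Suc_atMost)
  also have "\<dots> = (1 - x^Suc Y) / (1 - x)" by (subst sum_gp_strict) (use x in auto)
  also have "\<dots> \<le> 1 / (1 - x)" using x by (intro divide_right_mono) auto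
  also have "1 / (1 - x) = real p / (real p - 1)" unfolding x_def using p2
    by (simp add: field_simps)
  finally show ?thesis unfolding x_def .
qed

lemma mertens_lower:
  fixes Y :: nat
  assumes "Y \<ge> 1"
  shows "ln (ln (real Y + 1)) \<le> (\<Sum>p\<in>{p. prime p \<and> p \<le> Y}. ln (real p / (real p - 1)))"
proof -
  define A where "A = {p. prime p \<and> p \<le> Y}"
  have pos: "real p / (real p - 1) > 0" if "p \<in> A" for p
    using prime_ge_2_nat[of p] that unfolding A_def by auto
  have 0: "0 < ln (real Y + 1)" using assms by simp
  have h1: "ln (real Y + 1) \<le> harm Y" by (rule ln_le_harm)
  have h2: "harm Y \<le> (\<Prod>p\<in>A. \<Sum>i\<in>{..Y}. inverse (real p) ^ i)" unfolding A_def by (rule harm_le_euler_prod)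
  have h3: "(\<Prod>p\<in>A. \<Sum>i\<in>{..Y}. inverse (real p) ^ i) \<le> (\<Prod>p\<in>A. real p / (real p - 1))"
    by (rule prod_mono) (auto simp: A_def intro!: sum_nonneg geom_le)
  have 1: "ln (real Y + 1) \<le> (\<Prod>p\<in>A. real p / (real p - 1))" "0 < ln (real Y + 1)"
    using h1 h2 h3 0 by linarith+
  have "ln (ln (real Y + 1)) \<le> ln (\<Prod>p\<in>A. real p / (real p - 1))"
  proof (subst ln_le_cancel_iff)
    show "0 < (\<Prod>p\<in>A. real p / (real p - 1))" using 1 by linarith
  qed (use 1 in auto)
  also have "\<dots> = (\<Sum>p\<in>A. ln (real p / (real p - 1)))"
    by (rule ln_prod) (use pos in \<open>auto simp: A_def prime_gt_0_nat\<close>)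
  finally show ?thesis unfolding A_def .
qed

lemma partition_inv:
  fixes A :: "'a set" and w :: "'a \<Rightarrow> real" and l :: nat
  assumes "finite A" "l \<ge> 1" "\<forall>x\<in>A. 0 \<le> w x \<and> w x \<le> 1"
  shows "\<exists>part. (\<forall>x\<in>A. part x \<in> {1..l}) \<and>
    (\<forall>i\<in>{1..l}. \<forall>j\<in>{1..l}. (\<Sum>x\<in>{x\<in>A. part x = i}. w x) \<ge> (\<Sum>x\<in>{x\<in>A. part x = j}. w x) - 1)"
  using assms
proof (induction A rule: finite_induct)
  case empty
  show ?case by (rule exI[of _ "\<lambda>_. 1"]) simp
next
  case (insert a A)
  then obtain part where part: "\<forall>x\<in>A. part x \<in> {1..l}"
    "\<forall>i\<in>{1..l}. \<forall>j\<in>{1..l}. (\<Sum>x\<in>{x\<in>A. part x = i}. w x) \<ge> (\<Sum>x\<in>{x\<in>A. part x = j}. w x) - 1"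
    by auto
  define S where "S = (\<lambda>j. \<Sum>x\<in>{x\<in>A. part x = j}. w x)"
  have ne: "S ` {1..l} \<noteq> {}" using insert.prems by auto
  have "Min (S ` {1..l}) \<in> S ` {1..l}" using ne by (intro Min_in) auto
  then obtain j0 where j0: "j0 \<in> {1..l}" "S j0 = Min (S ` {1..l})" by auto
  have j0min: "\<And>j. j \<in> {1..l} \<Longrightarrow> S j0 \<le> S j" using j0 by simp
  define part' where "part' = part(a := j0)"
  have wa: "0 \<le> w a" "w a \<le> 1" using insert.prems by auto
  have S': "(\<Sum>x\<in>{x\<in>insert a A. part' x = j}. w x) = S j + (if j = j0 then w a else 0)" for j
  proof (cases "j = j0")
    case True
    have "{x\<in>insert a A. part' x = j} = insert a {x\<in>A. part x = j}"
      using True insert.hyps unfolding part'_def by auto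
    thus ?thesis using True insert.hyps by (simp add: S_def)
  next
    case False
    have "{x\<in>insert a A. part' x = j} = {x\<in>A. part x = j}"
      using False insert.hyps unfolding part'_def by auto
    thus ?thesis using False by (simp add: S_def)
  qed
  have inv: "\<forall>i\<in>{1..l}. \<forall>j\<in>{1..l}. S i \<ge> S j - 1" using part(2) unfolding S_def by blast
  show ?case
  proof (rule exI[of _ part'], intro conjI ballI)
    fix x assume "x \<in> insert a A"
    thus "part' x \<in> {1..l}" using part(1) j0 unfolding part'_def by auto
  next
    fix i j assume ij: "i \<in> {1..l}" "j \<in> {1..l}"
    show "(\<Sum>x\<in>{x\<in>insert a A. part' x = i}. w x) \<ge> (\<Sum>x\<in>{x\<in>insert a A. part' x = j}. w x) - 1"
      unfolding S' using inv ij j0min[OF ij(1)] j0min[OF ij(2)] wa inv[rule_format, OF j0(1) ij(2)] by auto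
  qed
qed

lemma partition_exists:
  fixes A :: "'a set" and w :: "'a \<Rightarrow> real" and l :: nat
  assumes fin: "finite A" and l: "l \<ge> 1" and w: "\<forall>x\<in>A. 0 \<le> w x \<and> w x \<le> 1"
  shows "\<exists>part. (\<forall>x\<in>A. part x \<in> {1..l}) \<and>
    (\<forall>j\<in>{1..l}. (\<Sum>x\<in>{x\<in>A. part x = j}. w x) \<ge> (\<Sum>x\<in>A. w x) / real l - 1)"
proof -
  obtain part where part: "\<forall>x\<in>A. part x \<in> {1..l}"
    "\<forall>i\<in>{1..l}. \<forall>j\<in>{1..l}. (\<Sum>x\<in>{x\<in>A. part x = i}. w x) \<ge> (\<Sum>x\<in>{x\<in>A. part x = j}. w x) - 1"
    using partition_inv[OF assms] by blast
  define S where "S = (\<lambda>j. \<Sum>x\<in>{x\<in>A. part x = j}. w x)"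
  have tot: "(\<Sum>j\<in>{1..l}. S j) = (\<Sum>x\<in>A. w x)"
    using sum.group[of A "{1..l}" part w] fin part(1) by (simp add: S_def image_subset_iff)
  show ?thesis
  proof (rule exI[of _ part], intro conjI)
    show "\<forall>x\<in>A. part x \<in> {1..l}" by (rule part(1))
  next
    show "\<forall>i\<in>{1..l}. (\<Sum>x\<in>{x\<in>A. part x = i}. w x) \<ge> (\<Sum>x\<in>A. w x) / real l - 1"
    proof
    fix i assume i: "i \<in> {1..l}"
    have "(\<Sum>j\<in>{1..l}. S j) \<le> (\<Sum>j\<in>{1..l}. S i + 1)"
    proof (rule sum_mono)
      fix j assume j: "j \<in> {1..l}"
      show "S j \<le> S i + 1" using part(2)[rule_format, OF i j] unfolding S_def by linarith
    qed
    also have "\<dots> = real l * (S i + 1)" by simp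
    finally have "(\<Sum>x\<in>A. w x) / real l \<le> S i + 1" using l tot by (simp add: field_simps)
    thus "(\<Sum>x\<in>{x\<in>A. part x = i}. w x) \<ge> (\<Sum>x\<in>A. w x) / real l - 1" unfolding S_def by simp
    qed
  qed
qed

lemma exps:
  fixes e k E :: nat
  assumes e: "e > 0" and k: "k \<ge> 1" and E: "E > 0" and cop: "coprime (k*E) e"
  shows "\<exists>x y \<alpha> \<beta>. 1 + k*E*x = e*\<alpha> \<and> k*E*y = e*\<beta> + 1"
proof -
  obtain u where u: "[k*E*u = Suc 0] (mod e)" using cong_solve_coprime_nat[OF cop] by blast
  define y where "y = u + e"
  have "[k*E*y = k*E*u + e*(k*E)] (mod e)" unfolding y_def by (simp add: algebra_simps)
  also have "[k*E*u + e*(k*E) = k*E*u] (mod e)" by (simp add: cong_def)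
  also note u
  finally have cy: "[k*E*y = 1] (mod e)" by simp
  have "e dvd k*E*y - 1" by (rule cong_to_1_nat[OF cy])
  then obtain \<beta> where \<beta>: "k*E*y - 1 = e*\<beta>" by blast
  have "y \<ge> 1" using e unfolding y_def by simp
  hence ge: "k*E*y \<ge> 1" using k E by (simp add: Suc_le_eq)
  have \<beta>': "k*E*y = e*\<beta> + 1" using \<beta> ge by arith
  have "1 + k*E*((e-1)*y) = 1 + (e-1)*(k*E*y)" by (simp add: algebra_simps)
  also have "\<dots> = 1 + (e-1)*(e*\<beta> + 1)" using \<beta>' by simp
  also have "\<dots> = e*(1 + (e-1)*\<beta>)" using e by (cases e) (auto simp: algebra_simps)
  finally show ?thesis using \<beta>' by blast
qed

lemma exists_c:
  fixes J :: "nat set" and a b :: "nat \<Rightarrow> int" and k e :: "nat \<Rightarrow> nat"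
  assumes finJ: "finite J"
    and a: "\<forall>j\<in>J. a j \<noteq> 0"
    and e: "\<forall>j\<in>J. e j > 0"
    and k: "\<forall>j\<in>J. k j \<ge> 1"
    and cop: "\<forall>i\<in>J. \<forall>j\<in>J. i \<noteq> j \<longrightarrow> coprime (e i) (e j)"
    and ck: "\<forall>j\<in>J. coprime (k j) (e j)"
  shows "\<exists>c::int. c \<noteq> 0 \<and> (\<forall>j\<in>J. b j \<noteq> 0 \<longrightarrow> (\<exists>\<gamma>. \<gamma> \<noteq> 0 \<and> a j * c ^ k j = b j * \<gamma> ^ e j))"
proof -
  define Ep where "Ep = (\<lambda>j. \<Prod>i\<in>J-{j}. e i)"
  have Ep_pos: "Ep j > 0" for j unfolding Ep_def using e by (intro prod_pos) auto
  have copE: "coprime (k j * Ep j) (e j)" if "j \<in> J" for j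
  proof -
    have "coprime (Ep j) (e j)" unfolding Ep_def
      by (rule prod_coprime_left) (use cop that in auto)
    thus ?thesis using ck that by simp
  qed
  have ex: "\<forall>j\<in>J. \<exists>t. 1 + k j*Ep j*fst t = e j * fst (snd t) \<and> k j*Ep j*fst (snd (snd t)) = e j * snd (snd (snd t)) + 1"
  proof
    fix j assume j: "j \<in> J"
    have "\<exists>x y \<alpha> \<beta>. 1 + k j*Ep j*x = e j*\<alpha> \<and> k j*Ep j*y = e j*\<beta> + 1"
      by (rule exps) (use e k Ep_pos copE j in auto)
    then obtain x y \<alpha> \<beta> where "1 + k j*Ep j*x = e j*\<alpha> \<and> k j*Ep j*y = e j*\<beta> + 1"
      by blast
    thus "\<exists>t. 1 + k j*Ep j*fst t = e j * fst (snd t) \<and> k j*Ep j*fst (snd (snd t)) = e j * snd (snd (snd t)) + 1"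
      by (intro exI[of _ "(x, \<alpha>, y, \<beta>)"]) simp
  qed
  obtain F where F: "\<forall>j\<in>J. 1 + k j*Ep j*fst (F j) = e j * fst (snd (F j)) \<and> k j*Ep j*fst (snd (snd (F j))) = e j * snd (snd (snd (F j))) + 1"
    using bchoice[OF ex] by (rule exE)
  define x where "x = (\<lambda>j. fst (F j))"
  define \<alpha> where "\<alpha> = (\<lambda>j. fst (snd (F j)))"
  define y where "y = (\<lambda>j. fst (snd (snd (F j))))"
  define \<beta> where "\<beta> = (\<lambda>j. snd (snd (snd (F j))))"
  have xy: "\<forall>j\<in>J. 1 + k j*Ep j*x j = e j*\<alpha> j \<and> k j*Ep j*y j = e j*\<beta> j + 1"
    using F unfolding x_def y_def \<alpha>_def \<beta>_def by blast
  define bb where "bb = (\<lambda>i. if b i = 0 then 1 else b i)"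
  define T where "T = (\<lambda>i. a i ^ x i * bb i ^ y i)"
  have T0: "T i \<noteq> 0" if "i \<in> J" for i using a that unfolding T_def bb_def by auto
  define c where "c = (\<Prod>i\<in>J. T i ^ Ep i)"
  have c0: "c \<noteq> 0" unfolding c_def using T0 finJ by auto
  have main: "\<exists>\<gamma>. \<gamma> \<noteq> 0 \<and> a j * c ^ k j = b j * \<gamma> ^ e j" if j: "j \<in> J" and bj: "b j \<noteq> 0" for j
  proof -
    define Eij where "Eij = (\<lambda>i. \<Prod>i'\<in>J-{i}-{j}. e i')"
    have Ei: "Ep i = e j * Eij i" if "i \<in> J-{j}" for i
      unfolding Ep_def Eij_def using that j finJ
      by (subst prod.remove[of "J-{i}" j]) auto
    define P where "P = (\<Prod>i\<in>J-{j}. T i ^ (Eij i * k j))"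
    have P0: "P \<noteq> 0" unfolding P_def using T0 finJ by auto
    have "c ^ k j = (\<Prod>i\<in>J. T i ^ (Ep i * k j))"
      unfolding c_def prod_power_distrib by (simp add: power_mult)
    also have "\<dots> = T j ^ (Ep j * k j) * (\<Prod>i\<in>J-{j}. T i ^ (Ep i * k j))"
      using finJ j by (simp add: prod.remove)
    also have "(\<Prod>i\<in>J-{j}. T i ^ (Ep i * k j)) = P ^ e j"
      unfolding P_def prod_power_distrib
      by (intro prod.cong refl) (simp add: Ei power_mult[symmetric] mult_ac)
    finally have ck': "c ^ k j = T j ^ (Ep j * k j) * P ^ e j" .
    have Tj: "T j = a j ^ x j * b j ^ y j" unfolding T_def bb_def using bj by simp
    have "a j * T j ^ (Ep j * k j) = a j ^ (1 + k j * Ep j * x j) * b j ^ (k j * Ep j * y j)"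
      unfolding Tj by (simp add: power_mult_distrib power_mult[symmetric] power_add mult_ac)
    also have "\<dots> = a j ^ (e j * \<alpha> j) * b j ^ (e j * \<beta> j + 1)" using xy j by simp
    also have "\<dots> = b j * (a j ^ \<alpha> j * b j ^ \<beta> j) ^ e j"
      by (simp add: power_mult_distrib power_mult[symmetric] power_add mult_ac)
    finally have "a j * c ^ k j = b j * (a j ^ \<alpha> j * b j ^ \<beta> j * P) ^ e j"
      unfolding ck' by (simp add: power_mult_distrib mult_ac)
    moreover have "a j ^ \<alpha> j * b j ^ \<beta> j * P \<noteq> 0" using a j bj P0 by simp
    ultimately show ?thesis by blast
  qed
  show ?thesis using c0 main by blast
qed

lemma prod_list_concat: "prod_list (concat xss) = prod_list (map prod_list xss)"
  by (induction xss) auto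

lemma prime_elem_dvd_prod_list:
  fixes q :: "'a :: comm_semiring_1"
  assumes "prime_elem q" "q dvd prod_list ps"
  shows "\<exists>p\<in>set ps. q dvd p"
  using assms(2)
proof (induction ps)
  case Nil thus ?case using assms(1) by (simp add: prime_elem_not_unit)
next
  case (Cons p ps) thus ?case using assms(1) by (auto simp: prime_elem_dvd_mult_iff)
qed

lemma pcompose_monom_gen: fixes a c :: int shows "pcompose (monom a k) (monom c E) = monom (a * c^k) (E*k)"
proof -
  have "monom a k = smult a (monom 1 k)" by (simp add: smult_monom)
  hence "pcompose (monom a k) (monom c E) = smult a ((monom c E)^k)"
    by (simp add: pcompose_smult pcompose_monom1)
  also have "\<dots> = monom (a * c^k) (E*k)" by (simp add: monom_power smult_monom)
  finally show ?thesis .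
qed

lemma factor_j:
  fixes a b c :: int and k e Eo :: nat
  assumes a: "a \<noteq> 0" and c: "c \<noteq> 0" and k: "k \<ge> 1" and e: "e > 0"
    and ab: "b \<noteq> 0 \<Longrightarrow> (\<exists>\<gamma>. \<gamma> \<noteq> 0 \<and> a * c^k = b * \<gamma>^e)"
  shows "\<exists>L::int poly list. prod_list L = monom (a * c^k) (e * Eo * k) - [:b:] \<and>
     (\<forall>p\<in>set L. degree p \<le> 1 \<or> degree p \<le> totient e * (k * Eo))"
proof (cases "b = 0")
  case True
  define L where "L = [:a * c^k:] # replicate (e*Eo*k) [:0,1::int:]"
  have "prod_list L = [:a * c^k:] * [:0,1:]^(e*Eo*k)" unfolding L_def by simp
  also have "\<dots> = monom (a * c^k) (e * Eo * k)" by (simp add: monom_altdef)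
  finally have "prod_list L = monom (a * c^k) (e * Eo * k) - [:b:]" using True by simp
  moreover have "\<forall>p\<in>set L. degree p \<le> 1" unfolding L_def by auto
  ultimately show ?thesis by blast
next
  case False
  then obtain \<gamma> where g: "\<gamma> \<noteq> 0" "a * c^k = b * \<gamma>^e" using ab by blast
  obtain qs :: "int poly list" where qs: "prod_list qs = monom (\<gamma>^e) ((k*Eo)*e) - 1"
     "\<forall>q\<in>set qs. degree q \<le> totient e * (k*Eo)"
    using power_factor_list[OF e g(1), of "k*Eo"] by blast
  define L where "L = [:b:] # qs"
  have "prod_list L = [:b:] * (monom (\<gamma>^e) ((k*Eo)*e) - 1)" unfolding L_def using qs by simp
  also have "\<dots> = monom (b * \<gamma>^e) ((k*Eo)*e) - [:b:]"
    by (simp add: smult_diff_right smult_monom)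
  finally have "prod_list L = monom (a * c^k) (e * Eo * k) - [:b:]" using g by (simp add: mult_ac)
  moreover have "\<forall>p\<in>set L. degree p \<le> 1 \<or> degree p \<le> totient e * (k * Eo)"
    unfolding L_def using qs(2) by auto
  ultimately show ?thesis by blast
qed

lemma totient_primes:
  fixes A :: "nat set"
  assumes "finite A" "\<forall>p\<in>A. prime p"
  shows "real (totient (\<Prod>p\<in>A. p)) = real (\<Prod>p\<in>A. p) * (\<Prod>p\<in>A. 1 - 1 / real p)"
  using assms
proof (induction A rule: finite_induct)
  case empty thus ?case by simp
next
  case (insert p A)
  have pp: "prime p" using insert.prems by simp
  have cop: "coprime p (\<Prod>q\<in>A. q)"
  proof (rule prod_coprime_right)
    fix q assume "q \<in> A"
    hence "prime q" "p \<noteq> q" using insert by auto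
    thus "coprime p q" using pp by (intro primes_coprime) auto
  qed
  have p1: "real p \<ge> 2" using prime_ge_2_nat[OF pp] by simp
  have "totient (\<Prod>q\<in>insert p A. q) = totient p * totient (\<Prod>q\<in>A. q)"
    using insert.hyps cop by (simp add: totient_mult_coprime)
  hence "real (totient (\<Prod>q\<in>insert p A. q)) = (real p - 1) * real (totient (\<Prod>q\<in>A. q))"
    using pp prime_ge_2_nat[OF pp] by (simp add: totient_prime of_nat_diff)
  also have "\<dots> = (real p - 1) * (real (\<Prod>p\<in>A. p) * (\<Prod>p\<in>A. 1 - 1 / real p))"
    using insert by simp
  also have "\<dots> = real (\<Prod>q\<in>insert p A. q) * (\<Prod>q\<in>insert p A. 1 - 1 / real q)"
    using insert.hyps p1 by (simp add: field_simps)
  finally show ?case .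
qed

lemma w_bounds:
  assumes "prime (p::nat)"
  shows "0 \<le> ln (real p / (real p - 1)) \<and> ln (real p / (real p - 1)) \<le> 1"
proof -
  have p2: "real p \<ge> 2" using prime_ge_2_nat[OF assms] by simp
  have g1: "real p / (real p - 1) \<ge> 1" using p2 by (simp add: field_simps)
  have "ln (real p / (real p - 1)) \<le> real p / (real p - 1) - 1"
    using g1 by (intro ln_le_minus_one) auto
  also have "\<dots> = 1 / (real p - 1)" using p2 by (simp add: field_simps)
  also have "\<dots> \<le> 1" using p2 by simp
  finally show ?thesis using g1 by simp
qed

lemma prod_exp_w:
  fixes A :: "nat set"
  assumes "finite A" "\<forall>p\<in>A. prime p"
  shows "(\<Prod>p\<in>A. 1 - 1 / real p) = exp (- (\<Sum>p\<in>A. ln (real p / (real p - 1))))"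
  using assms
proof (induction A rule: finite_induct)
  case empty thus ?case by simp
next
  case (insert p A)
  have p2: "real p \<ge> 2" using prime_ge_2_nat[of p] insert.prems by simp
  have "exp (- ln (real p / (real p - 1))) = 1 - 1 / real p"
  proof -
    have "exp (- ln (real p / (real p - 1))) = inverse (exp (ln (real p / (real p - 1))))"
      by (simp add: exp_minus)
    also have "\<dots> = inverse (real p / (real p - 1))" using p2 by simp
    also have "\<dots> = 1 - 1 / real p" using p2 by (simp add: field_simps)
    finally show ?thesis .
  qed
  moreover have "exp (- (\<Sum>q\<in>insert p A. ln (real q / (real q - 1)))) =
      exp (- ln (real p / (real p - 1))) * exp (- (\<Sum>q\<in>A. ln (real q / (real q - 1))))"
    using insert.hyps by (simp add: exp_add[symmetric])
  ultimately show ?case using insert by simp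
qed

lemma lnE_bound:
  fixes S :: "nat set" and Y :: nat
  assumes "finite S" "\<forall>p\<in>S. 1 \<le> p \<and> p \<le> Y" "card S \<le> Y"
  shows "ln (real (\<Prod>p\<in>S. p)) \<le> real Y * ln (real Y)"
proof -
  have "ln (real (\<Prod>p\<in>S. p)) = ln (\<Prod>p\<in>S. real p)" by simp
  also have "\<dots> = (\<Sum>p\<in>S. ln (real p))" using assms by (intro ln_prod) auto
  also have "\<dots> \<le> (\<Sum>p\<in>S. ln (real Y))" using assms by (intro sum_mono) auto
  also have "\<dots> = real (card S) * ln (real Y)" by simp
  also have "\<dots> \<le> real Y * ln (real Y)"
  proof (cases "S = {}")
    case True thus ?thesis by (cases "Y = 0") auto
  next
    case False
    then obtain p where "p \<in> S" by blast
    hence "real Y \<ge> 1" using assms by auto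
    hence "ln (real Y) \<ge> 0" by simp
    thus ?thesis using assms by (intro mult_right_mono) auto
  qed
  finally show ?thesis .
qed

lemma ln_27_ge: "ln (27::real) \<ge> 3"
proof -
  have "exp (3::real) = exp 1 ^ 3" using exp_of_nat_mult[of 3 1] by simp
  also have "\<dots> \<le> 3 ^ 3" by (rule power_mono) (use exp_le in auto)
  finally have "exp (3::real) \<le> 27" by simp
  thus ?thesis by (subst ln_ge_iff) auto
qed

lemma lnln_ge1: "real E \<ge> 27 \<Longrightarrow> ln (ln (real E)) \<ge> 1"
proof -
  assume E: "real E \<ge> 27"
  have "ln (real E) \<ge> ln 27" using E by simp
  hence l3: "ln (real E) \<ge> 3" using ln_27_ge by linarith
  have "exp 1 \<le> ln (real E)" using exp_le l3 by linarith
  thus ?thesis using l3 by (subst ln_ge_iff) auto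
qed

lemma real_bound:
  fixes l K Y E :: nat and Tj SumS Pj :: real
  assumes l: "l \<ge> 1" and Y: "Y \<ge> 3"
    and S: "SumS \<ge> ln (ln (real Y + 1)) - (real K + 1)"
    and T: "Tj \<ge> SumS / real l - 1"
    and P: "Pj = exp (- Tj)"
    and E: "E \<ge> 27" and lnE: "ln (real E) \<le> real Y * ln (real Y)"
  shows "Pj \<le> 2 * exp (real K + 2) / (ln (ln (real E))) powr (1 / real l)"
proof -
  have lpos: "real l \<ge> 1" using l by simp
  define LY where "LY = ln (real Y + 1)"
  define LL where "LL = ln (ln (real E))"
  have lnY: "ln (real Y) \<ge> 1"
  proof -
    have "exp 1 \<le> real Y" using exp_le Y by linarith
    thus ?thesis using Y by (subst ln_ge_iff) auto
  qed
  have LY_ge: "LY \<ge> ln (real Y)" unfolding LY_def using Y by simp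
  have LL1: "LL \<ge> 1" unfolding LL_def using E by (intro lnln_ge1) simp
  have lnEpos: "ln (real E) > 0" using E by simp
  have "LL \<le> ln (real Y * ln (real Y))" unfolding LL_def
    using lnE lnEpos by simp
  also have "\<dots> = ln (real Y) + ln (ln (real Y))" using lnY Y by (simp add: ln_mult)
  also have "\<dots> \<le> 2 * LY" using ln_less_self[of "ln (real Y)"] lnY LY_ge by linarith
  finally have LL_le: "LL \<le> 2 * LY" .
  have LYpos: "LY > 0" using LY_ge lnY by linarith
  have "LL powr (1 / real l) \<le> (2 * LY) powr (1 / real l)"
    using LL1 LL_le by (intro powr_mono2) auto
  also have "\<dots> = 2 powr (1 / real l) * LY powr (1 / real l)" by (rule powr_mult)
  also have "2 powr (1 / real l) \<le> 2 powr 1" using lpos by (intro powr_mono) auto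
  hence "2 powr (1 / real l) * LY powr (1 / real l) \<le> 2 * LY powr (1 / real l)"
    by (intro mult_right_mono) auto
  finally have LLp: "LL powr (1 / real l) \<le> 2 * LY powr (1 / real l)" .
  have LLp_pos: "LL powr (1 / real l) > 0" using LL1 by simp
  have "Pj \<le> exp (1 - SumS / real l)" unfolding P using T by simp
  also have "1 - SumS / real l \<le> real K + 2 - ln LY / real l"
  proof -
    have "SumS / real l \<ge> (ln LY - (real K + 1)) / real l"
      using S lpos unfolding LY_def by (intro divide_right_mono) auto
    moreover have "(real K + 1) / real l \<le> real K + 1"
    proof -
      have "(real K + 1) / real l \<le> (real K + 1) / 1" using lpos
        by (intro divide_left_mono) auto
      thus ?thesis by simp
    qed
    moreover have "(ln LY - (real K + 1)) / real l = ln LY / real l - (real K + 1) / real l"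
      by (rule diff_divide_distrib)
    ultimately show ?thesis by linarith
  qed
  hence "exp (1 - SumS / real l) \<le> exp (real K + 2 - ln LY / real l)" by simp
  also have "exp (real K + 2 - ln LY / real l) = exp (real K + 2) / LY powr (1 / real l)"
    using LYpos by (simp add: powr_def exp_diff)
  also have "\<dots> \<le> exp (real K + 2) * 2 / LL powr (1 / real l)"
  proof -
    have "LY powr (1 / real l) > 0" using LYpos by simp
    thus ?thesis using LLp LLp_pos by (simp add: field_simps)
  qed
  finally show ?thesis unfolding LL_def by (simp add: mult_ac)
qed

definition cst :: "(nat \<Rightarrow> nat) \<Rightarrow> nat \<Rightarrow> real" where
  "cst k l = 2 * real (\<Sum>j\<in>{1..l}. k j) * exp (real (\<Sum>j\<in>{1..l}. k j) + 2)"

lemma partA: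
  fixes l :: nat and k :: "nat \<Rightarrow> nat" and a b :: "nat \<Rightarrow> int" and D :: nat
  assumes l: "l \<ge> 1" and k: "\<forall>j\<in>{1..l}. k j \<ge> 1" and a: "\<forall>j\<in>{1..l}. a j \<noteq> 0"
  shows "\<exists>g::int poly. degree g \<ge> D \<and> degree g \<ge> 27 \<and>
    (\<exists>ps::int poly list. pcompose (\<Prod>j\<in>{1..l}. monom (a j) (k j) - [:b j:]) g = prod_list ps \<and>
       (\<forall>p\<in>set ps. real (degree p) \<le> cst k l * real (degree g) / (ln (ln (real (degree g)))) powr (1 / real l)))"
proof -
  define J where "J = {1..l}"
  have finJ: "finite J" unfolding J_def by simp
  define K where "K = (\<Sum>j\<in>J. k j)"
  have kK: "\<forall>j\<in>J. k j \<le> K" unfolding K_def using finJ by (auto intro: member_le_sum)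
  have K1: "K \<ge> 1"
  proof -
    have "1 \<in> J" using l unfolding J_def by simp
    thus ?thesis using kK k unfolding J_def by force
  qed
  obtain p0 where p0: "prime p0" "p0 > K + D + 30" using bigger_prime by blast
  define Y where "Y = p0"
  define S where "S = {p. prime p \<and> K < p \<and> p \<le> Y}"
  have finS: "finite S" unfolding S_def by simp
  have p0S: "p0 \<in> S" unfolding S_def Y_def using p0 by simp
  define w where "w = (\<lambda>p::nat. ln (real p / (real p - 1)))"
  have w01: "\<forall>p\<in>S. 0 \<le> w p \<and> w p \<le> 1" unfolding w_def S_def using w_bounds by blast
  obtain part where part: "\<forall>x\<in>S. part x \<in> {1..l}"
    "\<forall>j\<in>{1..l}. (\<Sum>x\<in>{x\<in>S. part x = j}. w x) \<ge> (\<Sum>x\<in>S. w x) / real l - 1"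
    using partition_exists[OF finS l w01] by blast
  define Sj where "Sj = (\<lambda>j. {p\<in>S. part p = j})"
  define e where "e = (\<lambda>j. \<Prod>p\<in>Sj j. p)"
  define E where "E = (\<Prod>j\<in>J. e j)"
  have finSj: "finite (Sj j)" for j unfolding Sj_def using finS by simp
  have Sj_prime: "\<forall>p\<in>Sj j. prime p" for j unfolding Sj_def S_def by auto
  have e_pos: "e j > 0" for j unfolding e_def using Sj_prime prime_gt_0_nat by (intro prod_pos) auto
  have E_eq: "E = (\<Prod>p\<in>S. p)"
    unfolding E_def e_def Sj_def J_def using prod.group[of S "{1..l}" part "\<lambda>p. p"] finS part(1)
    by (simp add: image_subset_iff)
  have cop: "\<forall>i\<in>J. \<forall>j\<in>J. i \<noteq> j \<longrightarrow> coprime (e i) (e j)"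
  proof (intro ballI impI)
    fix i j assume ij: "i \<in> J" "j \<in> J" "i \<noteq> j"
    show "coprime (e i) (e j)" unfolding e_def
    proof (rule prod_coprime_left, rule prod_coprime_right)
      fix p q assume "p \<in> Sj i" "q \<in> Sj j"
      hence "prime p" "prime q" "p \<noteq> q" using ij Sj_prime unfolding Sj_def by auto
      thus "coprime p q" by (rule primes_coprime)
    qed
  qed
  have ck: "\<forall>j\<in>J. coprime (k j) (e j)"
  proof
    fix j assume j: "j \<in> J"
    show "coprime (k j) (e j)" unfolding e_def
    proof (rule prod_coprime_right)
      fix p assume p: "p \<in> Sj j"
      hence pp: "prime p" and pK: "K < p" unfolding Sj_def S_def by auto
      have "\<not> p dvd k j"
      proof
        assume "p dvd k j"
        moreover have "k j \<ge> 1" using k j unfolding J_def by auto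
        ultimately have "p \<le> k j" by (intro dvd_imp_le) auto
        thus False using kK j pK by force
      qed
      hence "coprime p (k j)" using pp by (intro prime_imp_coprime)
      thus "coprime (k j) p" by (simp add: coprime_commute)
    qed
  qed
  obtain c where c: "c \<noteq> 0" "\<forall>j\<in>J. b j \<noteq> 0 \<longrightarrow> (\<exists>\<gamma>. \<gamma> \<noteq> 0 \<and> a j * c ^ k j = b j * \<gamma> ^ e j)"
  proof -
    have ac: "\<forall>j\<in>J. a j \<noteq> 0" "\<forall>j\<in>J. e j > 0" "\<forall>j\<in>J. k j \<ge> 1"
      using a k e_pos by (auto simp: J_def)
    show ?thesis using exists_c[OF finJ ac(1) ac(2) ac(3) cop ck, of b] that by blast
  qed
  define g where "g = monom c E"
  have degg: "degree g = E" unfolding g_def using c by (simp add: degree_monom_eq)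
  have E_ge: "E \<ge> p0"
  proof -
    have "p0 dvd E" unfolding E_eq using p0S finS by (intro dvd_prodI)
    moreover have "E > 0" unfolding E_def using e_pos by (intro prod_pos) auto
    ultimately show ?thesis by (intro dvd_imp_le)
  qed
  define Eo where "Eo = (\<lambda>j. \<Prod>i\<in>J-{j}. e i)"
  have E_split: "E = e j * Eo j" if "j \<in> J" for j
    unfolding E_def Eo_def using finJ that by (simp add: prod.remove)
  have exL: "\<forall>j\<in>J. \<exists>L::int poly list. prod_list L = monom (a j * c^k j) (e j * Eo j * k j) - [:b j:] \<and>
     (\<forall>p\<in>set L. degree p \<le> 1 \<or> degree p \<le> totient (e j) * (k j * Eo j))"
  proof
    fix j assume j: "j \<in> J"
    show "\<exists>L::int poly list. prod_list L = monom (a j * c^k j) (e j * Eo j * k j) - [:b j:] \<and>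
     (\<forall>p\<in>set L. degree p \<le> 1 \<or> degree p \<le> totient (e j) * (k j * Eo j))"
    proof (rule factor_j)
      show "a j \<noteq> 0" "k j \<ge> 1" using a k j by (auto simp: J_def)
      show "c \<noteq> 0" by (rule c(1))
      show "e j > 0" by (rule e_pos)
      show "b j \<noteq> 0 \<Longrightarrow> \<exists>\<gamma>. \<gamma> \<noteq> 0 \<and> a j * c ^ k j = b j * \<gamma> ^ e j" using c(2) j by blast
    qed
  qed
  obtain LL where LL: "\<forall>j\<in>J. prod_list (LL j) = monom (a j * c^k j) (e j * Eo j * k j) - [:b j:] \<and>
     (\<forall>p\<in>set (LL j). degree p \<le> 1 \<or> degree p \<le> totient (e j) * (k j * Eo j))"
    using bchoice[OF exL] by (rule exE)
  define ps where "ps = concat (map LL (sorted_list_of_set J))"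
  have comp: "pcompose (\<Prod>j\<in>{1..l}. monom (a j) (k j) - [:b j:]) g = prod_list ps"
  proof -
    have "pcompose (\<Prod>j\<in>{1..l}. monom (a j) (k j) - [:b j:]) g =
        (\<Prod>j\<in>J. monom (a j * c^k j) (E * k j) - [:b j:])"
      unfolding pcompose_prod J_def g_def by (simp add: pcompose_diff pcompose_monom_gen)
    also have "\<dots> = (\<Prod>j\<in>J. prod_list (LL j))"
      using LL E_split by (intro prod.cong refl) simp
    also have "\<dots> = prod_list ps"
      unfolding ps_def prod_list_concat using finJ
      by (simp add: prod.distinct_set_conv_list[symmetric] o_def)
    finally show ?thesis .
  qed
  have E27: "E \<ge> 27" and ED: "E \<ge> D" using E_ge p0 by auto
  define LLn where "LLn = ln (ln (real E))"
  define B where "B = cst k l * real E / LLn powr (1 / real l)"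
  have cst_eq: "cst k l = 2 * real K * exp (real K + 2)" unfolding cst_def K_def J_def by simp
  have LLn1: "LLn \<ge> 1" unfolding LLn_def using E27 by (intro lnln_ge1) simp
  have LLp_pos: "LLn powr (1 / real l) > 0" using LLn1 by simp
  have B1: "B \<ge> 1"
  proof -
    have "LLn powr (1 / real l) \<le> LLn powr 1" using LLn1 l by (intro powr_mono) auto
    also have "\<dots> = LLn" using LLn1 by simp
    also have "\<dots> \<le> ln (real E)" unfolding LLn_def using E27 by (intro less_imp_le ln_less_self) simp
    also have "\<dots> \<le> real E" using E27 by (simp add: less_imp_le)
    finally have le: "LLn powr (1 / real l) \<le> real E" .
    have cst1: "cst k l \<ge> 1"
    proof -
      have "exp (real K + 2) \<ge> 1" by simp
      moreover have "real K \<ge> 1" using K1 by simp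
      ultimately have "real K * exp (real K + 2) \<ge> 1 * 1" by (intro mult_mono) auto
      thus ?thesis unfolding cst_eq by simp
    qed
    have "1 \<le> cst k l * 1" using cst1 by simp
    also have "\<dots> \<le> cst k l * (real E / LLn powr (1 / real l))"
      using cst1 le LLp_pos by (intro mult_left_mono) (auto simp: field_simps)
    finally show ?thesis unfolding B_def by simp
  qed
  define SumS where "SumS = (\<Sum>p\<in>S. w p)"
  have Y3: "Y \<ge> 3" unfolding Y_def using p0 by simp
  have SumS_ge: "SumS \<ge> ln (ln (real Y + 1)) - (real K + 1)"
  proof -
    define PK where "PK = {p. prime p \<and> p \<le> K}"
    have KY: "K \<le> Y" unfolding Y_def using p0 by simp
    have split: "{p. prime p \<and> p \<le> Y} = S \<union> PK" unfolding S_def PK_def using KY by auto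
    have disj: "S \<inter> PK = {}" unfolding S_def PK_def by auto
    have "ln (ln (real Y + 1)) \<le> (\<Sum>p\<in>{p. prime p \<and> p \<le> Y}. w p)"
      unfolding w_def using Y3 by (intro mertens_lower) simp
    also have "\<dots> = SumS + (\<Sum>p\<in>PK. w p)" unfolding split SumS_def
      by (rule sum.union_disjoint) (use finS disj in \<open>auto simp: PK_def\<close>)
    also have "(\<Sum>p\<in>PK. w p) \<le> real (card PK) * 1"
      by (rule sum_bounded_above) (use w_bounds in \<open>auto simp: PK_def w_def\<close>)
    also have "card PK \<le> card {..K}" unfolding PK_def by (intro card_mono) auto
    hence "real (card PK) * 1 \<le> real K + 1" by simp
    finally show ?thesis by linarith
  qed
  have lnE: "ln (real E) \<le> real Y * ln (real Y)"
    unfolding E_eq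
  proof (rule lnE_bound[OF finS])
    show "\<forall>p\<in>S. 1 \<le> p \<and> p \<le> Y" unfolding S_def by auto
    have "card S \<le> card {1..Y}" unfolding S_def by (intro card_mono) auto
    thus "card S \<le> Y" by simp
  qed
  have bound: "real (degree p) \<le> B" if p: "p \<in> set ps" for p
  proof -
    obtain j where j: "j \<in> J" "p \<in> set (LL j)" using p finJ unfolding ps_def by auto
    have "degree p \<le> 1 \<or> degree p \<le> totient (e j) * (k j * Eo j)" using LL j by blast
    thus ?thesis
    proof
      assume "degree p \<le> 1" thus ?thesis using B1 by simp
    next
      assume dp: "degree p \<le> totient (e j) * (k j * Eo j)"
      define Pj where "Pj = (\<Prod>q\<in>Sj j. 1 - 1 / real q)"
      have tot: "real (totient (e j)) = real (e j) * Pj"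
        unfolding e_def Pj_def by (rule totient_primes[OF finSj Sj_prime])
      have "real (degree p) \<le> real (totient (e j)) * (real (k j) * real (Eo j))"
        using dp by (simp flip: of_nat_mult)
      also have "\<dots> = real (k j) * real E * Pj"
        using tot E_split[OF j(1)] by (simp add: mult_ac)
      also have "Pj \<le> 2 * exp (real K + 2) / LLn powr (1 / real l)"
        unfolding LLn_def
      proof (rule real_bound[OF l Y3 SumS_ge _ _ E27 lnE])
        show "Pj = exp (- (\<Sum>q\<in>Sj j. w q))"
          unfolding Pj_def w_def by (rule prod_exp_w[OF finSj Sj_prime])
        show "(\<Sum>q\<in>Sj j. w q) \<ge> SumS / real l - 1"
          using part(2) j(1) unfolding Sj_def SumS_def J_def by blast
      qed
      hence "real (k j) * real E * Pj \<le> real K * real E * (2 * exp (real K + 2) / LLn powr (1 / real l))"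
      proof -
        assume Pj_le: "Pj \<le> 2 * exp (real K + 2) / LLn powr (1 / real l)"
        have Pj0: "Pj \<ge> 0" unfolding Pj_def
        proof (intro prod_nonneg)
          fix q assume "q \<in> Sj j"
          hence "real q \<ge> 2" using Sj_prime prime_ge_2_nat by force
          thus "0 \<le> 1 - 1 / real q" by simp
        qed
        have "real (k j) \<le> real K" using kK j by simp
        thus ?thesis using Pj_le Pj0 by (intro mult_mono) auto
      qed
      also have "\<dots> = B" unfolding B_def cst_eq by (simp add: field_simps)
      finally show ?thesis .
    qed
  qed
  show ?thesis
  proof (intro exI conjI)
    show "degree g \<ge> D" "degree g \<ge> 27" using degg ED E27 by auto
    show "pcompose (\<Prod>j\<in>{1..l}. monom (a j) (k j) - [:b j:]) g = prod_list ps" by (rule comp)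
    show "\<forall>p\<in>set ps. real (degree p) \<le> cst k l * real (degree g) / (ln (ln (real (degree g)))) powr (1 / real l)"
      using bound unfolding B_def LLn_def degg by blast
  qed
qed

lemma degree_f:
  fixes l :: nat and k :: "nat \<Rightarrow> nat" and a b :: "nat \<Rightarrow> int"
  assumes l: "l \<ge> 1" and k: "\<forall>j\<in>{1..l}. k j \<ge> 1" and a: "\<forall>j\<in>{1..l}. a j \<noteq> 0"
  shows "degree (\<Prod>j\<in>{1..l}. monom (a j) (k j) - [:b j:]) \<ge> 1"
proof -
  have dj: "degree (monom (a j) (k j) - [:b j:]) = k j" if j: "j \<in> {1..l}" for j
  proof -
    have eq: "monom (a j) (k j) - [:b j:] = monom (a j) (k j) + [:- b j:]" by simp
    have kj: "k j \<ge> 1" "a j \<noteq> 0" using k a j by auto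
    show ?thesis unfolding eq
      using kj by (subst degree_add_eq_left) (auto simp: degree_monom_eq)
  qed
  have nz: "\<forall>j\<in>{1..l}. monom (a j) (k j) - [:b j:] \<noteq> 0"
  proof
    fix j assume j: "j \<in> {1..l}"
    show "monom (a j) (k j) - [:b j:] \<noteq> 0"
    proof
      assume "monom (a j) (k j) - [:b j:] = 0"
      hence "degree (monom (a j) (k j) - [:b j:]) = 0" by simp
      moreover have "k j \<ge> 1" using k j by auto
      ultimately show False using dj[OF j] by simp
    qed
  qed
  have "degree (\<Prod>j\<in>{1..l}. monom (a j) (k j) - [:b j:]) = (\<Sum>j\<in>{1..l}. k j)"
    using nz dj by (subst degree_prod_eq_sum_degree) auto
  also have "\<dots> \<ge> k 1" using l by (intro member_le_sum) auto
  moreover have "k 1 \<ge> 1" using k l by auto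
  ultimately show ?thesis by linarith
qed

theorem theorem2p1:
  fixes l :: nat and k :: "nat \<Rightarrow> nat"
  assumes "l \<ge> 1" and "\<forall>j\<in>{1..l}. k j \<ge> 1"
  shows "\<exists>c > (0::real). \<forall>(a :: nat \<Rightarrow> int) (b :: nat \<Rightarrow> int).
    (\<Prod>j\<in>{1..l}. a j) \<noteq> 0 \<longrightarrow>
    (let f = (\<Prod>j\<in>{1..l}. monom (a j) (k j) - [:b j:]) in
      (\<forall>D :: nat. \<exists>g :: int poly. degree g \<ge> D \<and>
         (\<exists>ps :: int poly list. pcompose f g = prod_list ps \<and>
            (\<forall>p\<in>set ps. real (degree p) \<le>
               c * real (degree g) / (ln (ln (real (degree g)))) powr (1 / real l)))) \<and>
      (\<forall>\<epsilon> > 0. admits_polysmoothness f \<epsilon>))"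
proof -
  note l = assms(1) and k = assms(2)
  define C where "C = cst k l"
  have Cpos: "C > 0"
  proof -
    have "(\<Sum>j\<in>{1..l}. k j) \<ge> k 1" using l by (intro member_le_sum) auto
    moreover have "k 1 \<ge> 1" using k l by auto
    ultimately have s1: "(\<Sum>j\<in>{1..l}. k j) \<ge> 1" by linarith
    define X where "X = real (\<Sum>j\<in>{1..l}. k j)"
    have X1: "X \<ge> 1" unfolding X_def using of_nat_mono[OF s1] by (simp only: of_nat_1)
    have "C = 2 * X * exp (X + 2)" unfolding C_def cst_def X_def by (rule refl)
    thus ?thesis using X1 by simp
  qed
  show ?thesis
  proof (rule exI[of _ C], intro conjI allI impI)
    show "C > 0" by (rule Cpos)
  next
    fix a b :: "nat \<Rightarrow> int"
    assume pa: "(\<Prod>j\<in>{1..l}. a j) \<noteq> 0"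
    have a: "\<forall>j\<in>{1..l}. a j \<noteq> 0" using pa by auto
    define f where "f = (\<Prod>j\<in>{1..l}. monom (a j) (k j) - [:b j:])"
    have A: "\<forall>D :: nat. \<exists>g :: int poly. degree g \<ge> D \<and> degree g \<ge> 27 \<and>
         (\<exists>ps :: int poly list. pcompose f g = prod_list ps \<and>
            (\<forall>p\<in>set ps. real (degree p) \<le>
               C * real (degree g) / (ln (ln (real (degree g)))) powr (1 / real l)))"
    proof
      fix D :: nat
      show "\<exists>g :: int poly. degree g \<ge> D \<and> degree g \<ge> 27 \<and>
         (\<exists>ps :: int poly list. pcompose f g = prod_list ps \<and>
            (\<forall>p\<in>set ps. real (degree p) \<le>
               C * real (degree g) / (ln (ln (real (degree g)))) powr (1 / real l)))"
        unfolding f_def C_def by (rule partA[OF l k a])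
    qed
    have degf: "degree f \<ge> 1" unfolding f_def by (rule degree_f[OF l k a])
    have B: "admits_polysmoothness f \<epsilon>" if eps: "\<epsilon> > 0" for \<epsilon>
    proof -
      define M where "M = (C / \<epsilon>) powr real l"
      define D where "D = nat \<lceil>exp (exp M)\<rceil>"
      obtain g ps where g: "degree g \<ge> D" "degree g \<ge> 27" "pcompose f g = prod_list ps"
        "\<forall>p\<in>set ps. real (degree p) \<le> C * real (degree g) / (ln (ln (real (degree g)))) powr (1 / real l)"
        using A[rule_format, of D] by (elim exE conjE) blast
      define d where "d = degree g"
      have d27: "real d \<ge> 27" using g(2) unfolding d_def by simp
      have dM: "real d \<ge> exp (exp M)" using g(1) unfolding d_def D_def by linarith
      have "ln (real d) \<ge> exp M" using dM d27 by (subst ln_ge_iff) auto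
      hence LM: "ln (ln (real d)) \<ge> M" using d27 by (subst ln_ge_iff) auto
      have Mpos: "M > 0" unfolding M_def using Cpos eps by simp
      have "ln (ln (real d)) powr (1 / real l) \<ge> M powr (1 / real l)"
        using LM Mpos l by (intro powr_mono2) auto
      also have "M powr (1 / real l) = C / \<epsilon>" unfolding M_def using l Cpos eps
        by (simp add: powr_powr)
      finally have Lp: "ln (ln (real d)) powr (1 / real l) \<ge> C / \<epsilon>" .
      have Ce: "C / \<epsilon> > 0" using Cpos eps by simp
      have key: "C * real d / (ln (ln (real d))) powr (1 / real l) \<le> \<epsilon> * real (degree f) * real d"
      proof -
        have "C / (ln (ln (real d))) powr (1 / real l) \<le> C / (C / \<epsilon>)"
        proof (rule divide_left_mono)
          show "C / \<epsilon> \<le> ln (ln (real d)) powr (1 / real l)" by (rule Lp)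
          show "0 \<le> C" using Cpos by simp
          have "ln (ln (real d)) powr (1 / real l) > 0" using Lp Ce by linarith
          thus "0 < ln (ln (real d)) powr (1 / real l) * (C / \<epsilon>)" using Ce by (rule mult_pos_pos)
        qed
        also have "\<dots> = \<epsilon>" using Cpos eps by simp
        finally have 1: "C / (ln (ln (real d))) powr (1 / real l) \<le> \<epsilon>" .
        have "C * real d / (ln (ln (real d))) powr (1 / real l) =
            real d * (C / (ln (ln (real d))) powr (1 / real l))" by simp
        also have "\<dots> \<le> real d * \<epsilon>" using 1 by (intro mult_left_mono) auto
        also have "\<dots> \<le> real d * (\<epsilon> * real (degree f))"
          using degf eps by (intro mult_left_mono) auto
        finally show ?thesis by (simp add: mult_ac)
      qed
      have fg0: "pcompose f g \<noteq> 0"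
      proof
        assume "pcompose f g = 0"
        hence "degree (pcompose f g) = 0" by simp
        thus False using degf g(2) by (simp add: degree_pcompose)
      qed
      show ?thesis unfolding admits_polysmoothness_def
      proof (rule exI[of _ g], intro conjI allI impI)
        show "degree g > 0" using g(2) by simp
      next
        fix q :: "int poly" assume q: "irreducible q \<and> q dvd pcompose f g"
        hence "prime_elem q" by (simp add: prime_elem_iff_irreducible)
        moreover have "q dvd prod_list ps" using q g(3) by simp
        ultimately obtain p where p: "p \<in> set ps" "q dvd p" using prime_elem_dvd_prod_list by blast
        have "p \<noteq> 0" using p(1) fg0 g(3) by (auto simp: prod_list_zero_iff)
        hence "degree q \<le> degree p" using p(2) by (rule dvd_imp_degree_le[rotated])
        hence "real (degree q) \<le> real (degree p)" by simp
        also have "\<dots> \<le> C * real d / (ln (ln (real d))) powr (1 / real l)"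
          using g(4) p(1) unfolding d_def by blast
        also have "\<dots> \<le> \<epsilon> * real (degree f) * real d" by (rule key)
        finally show "real (degree q) \<le> \<epsilon> * real (degree f) * real (degree g)" unfolding d_def .
      qed
    qed
    show "let f = (\<Prod>j\<in>{1..l}. monom (a j) (k j) - [:b j:]) in
      (\<forall>D :: nat. \<exists>g :: int poly. degree g \<ge> D \<and>
         (\<exists>ps :: int poly list. pcompose f g = prod_list ps \<and>
            (\<forall>p\<in>set ps. real (degree p) \<le>
               C * real (degree g) / (ln (ln (real (degree g)))) powr (1 / real l)))) \<and>
      (\<forall>\<epsilon> > 0. admits_polysmoothness f \<epsilon>)"
      unfolding Let_def f_def[symmetric]
    proof (intro conjI allI impI)
      fix D :: nat
      obtain g ps where g: "degree g \<ge> D" "pcompose f g = prod_list ps"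
        "\<forall>p\<in>set ps. real (degree p) \<le> C * real (degree g) / (ln (ln (real (degree g)))) powr (1 / real l)"
        using A[rule_format, of D] by (elim exE conjE) blast
      show "\<exists>g :: int poly. degree g \<ge> D \<and>
         (\<exists>ps :: int poly list. pcompose f g = prod_list ps \<and>
            (\<forall>p\<in>set ps. real (degree p) \<le>
               C * real (degree g) / (ln (ln (real (degree g)))) powr (1 / real l)))"
        using g by blast
    next
      fix \<epsilon> :: real assume "\<epsilon> > 0"
      thus "admits_polysmoothness f \<epsilon>" by (rule B)
    qed
  qed
qed

end
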